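(* Let $P$ be the set of $n\geq 3$ points equally spaced on the unit circle. Every geometric spanner on $P$ with dilation less than $2$ contains every edge of the convex hull of $P$ (i.e. every edge between two points consecutive on the circle).
   Context: A geometric spanner on $P$ is a graph with vertex set $P$ whose edges are weighted by the Euclidean distance between their endpoints. Its dilation is $\max\{ d_G(p,p')/|pp'| : p\neq p'\in P\}$, where $d_G$ is the shortest-path distance and $|pp'|$ the Euclidean distance. *)

theory Defs
  imports "HOL-Analysis.Analysis"
begin

definition regular_points :: "nat \<Rightarrow> complex set" where
  "regular_points n = {cis (2 * pi * real k / real n) | k. k < n}"

definition geometric_graph :: "complex set \<Rightarrow> complex set set \<Rightarrow> bool" where
  "geometric_graph V E \<longleftrightarrow> (\<forall>e\<in>E. \<exists>p q. p \<in> V \<and> q \<in> V \<and> p \<noteq> q \<and> e = {p, q})"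

definition is_walk :: "complex set set \<Rightarrow> complex \<Rightarrow> complex \<Rightarrow> complex list \<Rightarrow> bool" where
  "is_walk E p q xs \<longleftrightarrow> xs \<noteq> [] \<and> hd xs = p \<and> last xs = q \<and>
     (\<forall>i. Suc i < length xs \<longrightarrow> {xs ! i, xs ! Suc i} \<in> E)"

definition walk_length :: "complex list \<Rightarrow> real" where
  "walk_length xs = sum_list (map (\<lambda>(a, b). dist a b) (zip xs (tl xs)))"

text \<open>Shortest-path distance (infinite if no path exists).\<close>
definition graph_dist :: "complex set set \<Rightarrow> complex \<Rightarrow> complex \<Rightarrow> ereal" where
  "graph_dist E p q = (INF xs \<in> {xs. is_walk E p q xs}. ereal (walk_length xs))"

definition dilation :: "complex set \<Rightarrow> complex set set \<Rightarrow> ereal" where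
  "dilation V E = (SUP pq \<in> {(p, q). p \<in> V \<and> q \<in> V \<and> p \<noteq> q}.
      graph_dist E (fst pq) (snd pq) / ereal (dist (fst pq) (snd pq)))"

end

theory Submission
  imports Defs
begin

lemma cos_shift_int: "cos (x + 2 * pi * of_int t) = cos x"
  by (simp add: cos_add)

lemma cos_bound:
  fixes n :: nat and m :: int
  assumes n: "n \<ge> 2" and m: "m mod int n \<noteq> 0"
  shows "cos (2 * pi * real_of_int m / real n) \<le> cos (2 * pi / real n)"
proof -
  define m' where "m' = m mod int n"
  define t where "t = m div int n"
  have mm: "m = m' + int n * t" unfolding m'_def t_def by simp
  have m'0: "0 \<le> m'" "m' < int n" using n unfolding m'_def by simp_all
  have m'pos: "0 < m'" "m' < int n" using m'0 m unfolding m'_def by auto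
  have npos: "real n > 0" using n by simp
  have "2 * pi * real_of_int m / real n = 2 * pi * real_of_int m' / real n + 2 * pi * of_int t"
    using npos by (simp add: mm field_simps)
  hence eq: "cos (2 * pi * real_of_int m / real n) = cos (2 * pi * real_of_int m' / real n)"
    by (simp add: cos_shift_int)
  have key: "cos (2 * pi * real_of_int k / real n) \<le> cos (2 * pi / real n)"
    if "1 \<le> k" "2 * k \<le> int n" for k :: int
  proof (rule cos_monotone_0_pi_le)
    show "0 \<le> 2 * pi / real n" using npos by simp
    have "1 \<le> real_of_int k" using that by simp
    then show "2 * pi / real n \<le> 2 * pi * real_of_int k / real n"
      using npos by (simp add: divide_right_mono)
    have "2 * real_of_int k \<le> real n" using that by linarith
    then show "2 * pi * real_of_int k / real n \<le> pi"
      using npos pi_gt_zero by (simp add: field_simps)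
  qed
  show ?thesis
  proof (cases "2 * m' \<le> int n")
    case True
    then show ?thesis using eq key[of m'] m'pos by simp
  next
    case False
    have "2 * pi * real_of_int m' / real n = 2 * pi - 2 * pi * real_of_int (int n - m') / real n"
      using npos by (simp add: field_simps)
    hence "cos (2 * pi * real_of_int m' / real n) = cos (2 * pi * real_of_int (int n - m') / real n)"
      by simp
    then show ?thesis using eq key[of "int n - m'"] m'pos False by simp
  qed
qed

lemma dist_cis_sq: "(dist (cis a) (cis b))\<^sup>2 = 2 - 2 * cos (a - b)"
proof -
  have "(dist (cis a) (cis b))\<^sup>2 = (cos a - cos b)\<^sup>2 + (sin a - sin b)\<^sup>2"
    by (simp add: dist_norm cmod_power2)
  also have "\<dots> = (cos a)\<^sup>2 + (sin a)\<^sup>2 + ((cos b)\<^sup>2 + (sin b)\<^sup>2) - 2 * (cos a * cos b + sin a * sin b)"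
    by (simp add: power2_eq_square algebra_simps)
  also have "\<dots> = 2 - 2 * cos (a - b)" by (simp add: cos_diff)
  finally show ?thesis .
qed

lemma dist_regular_ge:
  fixes n j l :: nat
  assumes n: "n \<ge> 3"
    and ne: "cis (2 * pi * real j / real n) \<noteq> cis (2 * pi * real l / real n)"
  shows "dist (cis (2 * pi * real j / real n)) (cis (2 * pi * real l / real n))
         \<ge> dist (cis (2 * pi * real 0 / real n)) (cis (2 * pi * real 1 / real n))"
proof -
  have npos: "real n > 0" using n by simp
  define m where "m = int j - int l"
  have diff: "2 * pi * real j / real n - 2 * pi * real l / real n = 2 * pi * real_of_int m / real n"
    unfolding m_def using npos by (simp add: field_simps)
  have mm: "m mod int n \<noteq> 0"
  proof
    assume h: "m mod int n = 0"
    then obtain t where t: "m = int n * t" by auto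
    have "2 * pi * real j / real n = 2 * pi * real l / real n + 2 * pi * of_int t"
      using diff npos by (simp add: t field_simps)
    hence "cis (2 * pi * real j / real n) = cis (2 * pi * real l / real n) * cis (2 * pi * of_int t)"
      by (simp only: cis_mult)
    also have "cis (2 * pi * of_int t) = 1" by (rule cis_multiple_2pi) simp
    finally show False using ne by simp
  qed
  have c: "cos (2 * pi * real_of_int m / real n) \<le> cos (2 * pi / real n)"
    using cos_bound[OF _ mm] n by simp
  have "(dist (cis (2 * pi * real 0 / real n)) (cis (2 * pi * real 1 / real n)))\<^sup>2
      \<le> (dist (cis (2 * pi * real j / real n)) (cis (2 * pi * real l / real n)))\<^sup>2"
    unfolding dist_cis_sq diff using c by simp
  then show ?thesis by (rule power2_le_imp_le) simp
qed

lemma walk_length_Cons2: "walk_length (x # y # xs) = dist x y + walk_length (y # xs)"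
  by (simp add: walk_length_def)

lemma walk_length_ge: "xs \<noteq> [] \<Longrightarrow> dist (hd xs) (last xs) \<le> walk_length xs"
proof (induction xs)
  case Nil then show ?case by simp
next
  case (Cons x xs)
  show ?case
  proof (cases xs)
    case Nil then show ?thesis by (simp add: walk_length_def)
  next
    case (Cons y ys)
    have "dist x (last xs) \<le> dist x y + dist y (last xs)" by (rule dist_triangle)
    then show ?thesis using Cons.IH Cons by (simp add: walk_length_Cons2)
  qed
qed

lemma walk_length_via: "r \<in> set xs \<Longrightarrow> dist (hd xs) r + dist r (last xs) \<le> walk_length xs"
proof (induction xs)
  case Nil then show ?case by simp
next
  case (Cons x xs)
  show ?case
  proof (cases xs)
    case Nil then show ?thesis using Cons.prems by (simp add: walk_length_def)
  next
    case (Cons y ys)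
    show ?thesis
    proof (cases "r = x")
      case True
      then show ?thesis using walk_length_ge[of "x # xs"] Cons by simp
    next
      case False
      then have "r \<in> set xs" using Cons.prems by simp
      then have "dist y r + dist r (last xs) \<le> walk_length xs" using Cons.IH Cons by simp
      moreover have "dist x r \<le> dist x y + dist y r" by (rule dist_triangle)
      ultimately show ?thesis using Cons by (simp add: walk_length_Cons2)
    qed
  qed
qed

lemma exists_step: "xs \<noteq> [] \<Longrightarrow> hd xs \<noteq> last xs \<Longrightarrow> \<exists>i. Suc i < length xs \<and> xs ! i \<noteq> xs ! Suc i"
proof (induction xs)
  case Nil then show ?case by simp
next
  case (Cons x xs)
  show ?case
  proof (cases xs)
    case Nil then show ?thesis using Cons.prems by simp
  next
    case (Cons y ys)
    show ?thesis
    proof (cases "x = y")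
      case False then show ?thesis using Cons by (intro exI[of _ 0]) simp
    next
      case True
      then obtain i where "Suc i < length xs" "xs ! i \<noteq> xs ! Suc i"
        using Cons.IH Cons.prems Cons by auto
      then show ?thesis by (intro exI[of _ "Suc i"]) simp
    qed
  qed
qed

lemma edge_props:
  assumes "geometric_graph V E" "{x, y} \<in> E"
  shows "x \<noteq> y \<and> x \<in> V \<and> y \<in> V"
proof -
  obtain a b where "a \<in> V" "b \<in> V" "a \<noteq> b" "{x, y} = {a, b}"
    using assms unfolding geometric_graph_def by blast
  then show ?thesis by (auto simp: doubleton_eq_iff)
qed

theorem lemma26:
  fixes n :: nat and E :: "complex set set"
  assumes "n \<ge> 3"
    and "geometric_graph (regular_points n) E"
    and "dilation (regular_points n) E < 2"
  shows "\<forall>k<n. {cis (2 * pi * real k / real n), cis (2 * pi * real (Suc k) / real n)} \<in> E"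
proof (intro allI impI)
  fix k assume k: "k < n"
  define V where "V = regular_points n"
  define p where "p = cis (2 * pi * real k / real n)"
  define q where "q = cis (2 * pi * real (Suc k) / real n)"
  define d where "d = dist p q"
  have n3: "n \<ge> 3" by fact
  have GG: "geometric_graph V E" using assms(2) V_def by simp
  have npos: "real n > 0" using n3 by simp
  have pV: "p \<in> V" unfolding p_def V_def regular_points_def using k by blast
  have qV: "q \<in> V"
  proof (cases "Suc k < n")
    case True then show ?thesis unfolding q_def V_def regular_points_def by blast
  next
    case False
    then have "Suc k = n" using k by simp
    then have "q = cis (2 * pi * real 0 / real n)" unfolding q_def using npos by simp
    moreover have "(0::nat) < n" using n3 by simp
    ultimately show ?thesis unfolding V_def regular_points_def by blast
  qed
  have d0: "d = dist (cis (2 * pi * real 0 / real n)) (cis (2 * pi * real 1 / real n))"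
  proof -
    have "d\<^sup>2 = (dist (cis (2 * pi * real 0 / real n)) (cis (2 * pi * real 1 / real n)))\<^sup>2"
    proof -
      have "2 * pi * real k / real n - 2 * pi * real (Suc k) / real n = - (2 * pi / real n)"
        using npos by (simp add: field_simps)
      then show ?thesis unfolding d_def p_def q_def dist_cis_sq by simp
    qed
    then show ?thesis unfolding d_def by (simp add: power2_eq_iff_nonneg)
  qed
  have dpos: "d > 0"
  proof -
    have "cos (2 * pi / real n) < cos 0"
    proof (rule cos_monotone_0_pi)
      show "0 < 2 * pi / real n" using npos by simp
      have "2 \<le> real n" using n3 by simp
      then show "2 * pi / real n \<le> pi" using npos pi_gt_zero by (simp add: field_simps)
    qed simp
    then have "d\<^sup>2 > 0" unfolding d0 dist_cis_sq by simp
    then show ?thesis unfolding d_def by simp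
  qed
  show "{cis (2 * pi * real k / real n), cis (2 * pi * real (Suc k) / real n)} \<in> E"
  proof (rule ccontr)
    assume nE: "{cis (2 * pi * real k / real n), cis (2 * pi * real (Suc k) / real n)} \<notin> E"
    then have nE': "{p, q} \<notin> E" unfolding p_def q_def .
    have pq: "p \<noteq> q" using dpos unfolding d_def by auto
    have walk_bound: "ereal (2 * d) \<le> ereal (walk_length xs)" if w: "is_walk E p q xs" for xs
    proof -
      have ne: "xs \<noteq> []" and hd: "hd xs = p" and lst: "last xs = q"
        and st: "\<And>i. Suc i < length xs \<Longrightarrow> {xs ! i, xs ! Suc i} \<in> E"
        using w unfolding is_walk_def by auto
      have len: "length xs \<ge> 2"
      proof (rule ccontr)
        assume "\<not> length xs \<ge> 2"
        moreover have "length xs \<noteq> 0" using ne by simp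
        ultimately have "length xs = 1" by linarith
        then obtain a where "xs = [a]" by (metis length_0_conv length_Suc_conv One_nat_def)
        then show False using hd lst pq by simp
      qed
      have inV: "xs ! i \<in> V" if "i < length xs" for i
      proof (cases "Suc i < length xs")
        case True then show ?thesis using edge_props[OF GG st[OF True]] by simp
      next
        case False
        then have "i > 0" "Suc (i - 1) < length xs" "Suc (i - 1) = i" using that len by auto
        then show ?thesis using edge_props[OF GG st[of "i - 1"]] by simp
      qed
      obtain r where r: "r \<in> set xs" "r \<noteq> p" "r \<noteq> q"
      proof (rule ccontr)
        assume "\<not> thesis"
        then have all: "\<forall>r \<in> set xs. r = p \<or> r = q" using that by blast
        obtain i where i: "Suc i < length xs" "xs ! i \<noteq> xs ! Suc i"
          using exists_step[OF ne] hd lst pq by auto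
        have "xs ! i \<in> set xs" "xs ! Suc i \<in> set xs" using i by auto
        then have "xs ! i = p \<or> xs ! i = q" "xs ! Suc i = p \<or> xs ! Suc i = q" using all by auto
        then have "{xs ! i, xs ! Suc i} = {p, q}" using i(2) by (elim disjE) (simp_all add: insert_commute)
        then show False using st[OF i(1)] nE' by simp
      qed
      have rV: "r \<in> V" using r(1) inV by (auto simp: in_set_conv_nth)
      then obtain j where j: "r = cis (2 * pi * real j / real n)"
        unfolding V_def regular_points_def by blast
      have "d \<le> dist p r" unfolding d0 p_def j
        by (rule dist_regular_ge[OF n3]) (use r j p_def in auto)
      moreover have "d \<le> dist r q" unfolding d0 q_def j
        by (rule dist_regular_ge[OF n3]) (use r j q_def in auto)
      moreover have "dist p r + dist r q \<le> walk_length xs"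
        using walk_length_via[OF r(1)] hd lst by simp
      ultimately show ?thesis by simp
    qed
    have gd: "ereal (2 * d) \<le> graph_dist E p q"
      unfolding graph_dist_def by (rule INF_greatest) (use walk_bound in auto)
    have ratio: "2 \<le> graph_dist E p q / ereal d"
    proof (cases "graph_dist E p q")
      case (real x)
      then have "2 * d \<le> x" using gd by simp
      then have "2 \<le> x / d" using dpos by (simp add: field_simps)
      then show ?thesis using real dpos by simp
    next
      case PInf then show ?thesis using dpos by simp
    next
      case MInf then show ?thesis using gd by simp
    qed
    have "graph_dist E p q / ereal d \<le> dilation V E"
      unfolding dilation_def d_def
      by (rule SUP_upper2[of "(p, q)"]) (use pV qV pq in auto)
    then show False using ratio assms(3) V_def by simp
  qed
qed

end
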